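(* Let $K\subseteq\mathbb{R}^d$ be a compact, smooth $d$-manifold with boundary. For every $\lambda>0$ there exists $\rho_2=\rho_2(K,\lambda)>0$ such that if $x\in K$, $B(y,r)\subseteq K$ and $\|x-y\|\leq\lambda r$ for some $0<r<\rho_2$, then $\operatorname{conv}(\{x,y\})\subseteq K$.
   Context: $K\subseteq\mathbb{R}^d$ being a smooth $d$-manifold with boundary means: for every $x\in K$ there are open sets $O,U\subseteq\mathbb{R}^d$ with $x\in O$ and a diffeomorphism $\varphi:O\to U$ with $\varphi[O\cap K]=U\cap\mathbb{H}^d$, where $\mathbb{H}^d=[0,\infty)\times\mathbb{R}^{d-1}$. $B(y,r)$ is the open Euclidean ball; $\operatorname{conv}$ denotes convex hull. *)

theory Defs
  imports "HOL-Analysis.Analysis"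
begin

fun Ck_on :: "nat \<Rightarrow> 'a::euclidean_space set \<Rightarrow> ('a \<Rightarrow> 'b::euclidean_space) \<Rightarrow> bool" where
  "Ck_on 0 S f = continuous_on S f"
| "Ck_on (Suc k) S f = (f differentiable_on S \<and>
      (\<forall>v. Ck_on k S (\<lambda>x. frechet_derivative f (at x) v)))"

definition smooth_on :: "'a::euclidean_space set \<Rightarrow> ('a \<Rightarrow> 'b::euclidean_space) \<Rightarrow> bool" where
  "smooth_on S f \<longleftrightarrow> (\<forall>k. Ck_on k S f)"

definition diffeomorphism_between :: "('a::euclidean_space \<Rightarrow> 'a) \<Rightarrow> 'a set \<Rightarrow> 'a set \<Rightarrow> bool" where
  "diffeomorphism_between \<phi> V U \<longleftrightarrow> open V \<and> open U \<and> bij_betw \<phi> V U \<and>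
     smooth_on V \<phi> \<and> smooth_on U (inv_into V \<phi>)"

text \<open>Half space H^d = [0,\<infinity>) \<times> R^(d-1): first coordinate nonnegative.\<close>
definition half_space :: "(real^'n::{finite,wellorder}) set" where
  "half_space = {x. 0 \<le> x $ (LEAST i. True)}"

definition smooth_manifold_with_boundary :: "(real^'n::{finite,wellorder}) set \<Rightarrow> bool" where
  "smooth_manifold_with_boundary K \<longleftrightarrow>
     (\<forall>x\<in>K. \<exists>V U \<phi>. x \<in> V \<and> diffeomorphism_between \<phi> V U \<and>
        \<phi> ` (V \<inter> K) = U \<inter> half_space)"

end

theory Submission
  imports Defs
begin


lemma chart_facts:
  fixes K :: "(real^'n::{finite,wellorder}) set"
  assumes "p \<in> V" "diffeomorphism_between \<phi> V U" "\<phi> ` (V \<inter> K) = U \<inter> half_space"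
  defines "i \<equiv> (LEAST i::'n. True)"
  shows "open V"
    and "\<And>z. z \<in> V \<Longrightarrow> (z \<in> K \<longleftrightarrow> 0 \<le> \<phi> z $ i)"
    and "\<And>z. z \<in> V \<Longrightarrow> (\<phi> has_derivative frechet_derivative \<phi> (at z)) (at z)"
    and "\<And>w. continuous_on V (\<lambda>z. frechet_derivative \<phi> (at z) w)"
    and "\<exists>v. frechet_derivative \<phi> (at p) v $ i = 1"
proof -
  note d = assms(2)[unfolded diffeomorphism_between_def]
  show oV: "open V" using d by auto
  have inj: "inj_on \<phi> V" and img: "\<phi> ` V = U" using d by (auto simp: bij_betw_def)
  show "z \<in> K \<longleftrightarrow> 0 \<le> \<phi> z $ i" if "z \<in> V" for z
  proof
    assume "z \<in> K"
    then have "\<phi> z \<in> U \<inter> half_space" using assms(3) that by blast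
    then show "0 \<le> \<phi> z $ i" by (simp add: half_space_def i_def)
  next
    assume "0 \<le> \<phi> z $ i"
    then have "\<phi> z \<in> U \<inter> half_space" using img that by (auto simp: half_space_def i_def)
    then obtain z' where "z' \<in> V \<inter> K" "\<phi> z' = \<phi> z" using assms(3) by (metis imageE)
    then show "z \<in> K" using inj that by (metis IntD1 IntD2 inj_on_def)
  qed
  have s1: "Ck_on (Suc 0) V \<phi>" using d smooth_on_def by blast
  then have dV: "\<phi> differentiable_on V" by simp
  show der: "(\<phi> has_derivative frechet_derivative \<phi> (at z)) (at z)" if "z \<in> V" for z
    using dV that oV by (metis differentiable_on_eq_differentiable_at frechet_derivative_works)
  show "continuous_on V (\<lambda>z. frechet_derivative \<phi> (at z) w)" for w using s1 by simp
  define \<psi> where "\<psi> = inv_into V \<phi>"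
  have s2: "Ck_on (Suc 0) U \<psi>" using d smooth_on_def \<psi>_def by blast
  then have dU: "\<psi> differentiable_on U" by simp
  have oU: "open U" using d by auto
  have pU: "\<phi> p \<in> U" using img assms(1) by blast
  have psip: "\<psi> (\<phi> p) = p" using inj assms(1) \<psi>_def by simp
  define D\<psi> where "D\<psi> = frechet_derivative \<psi> (at (\<phi> p))"
  have dpsi: "(\<psi> has_derivative D\<psi>) (at (\<phi> p))"
    using dU pU oU D\<psi>_def by (metis differentiable_on_eq_differentiable_at frechet_derivative_works)
  have "((\<phi> \<circ> \<psi>) has_derivative (frechet_derivative \<phi> (at p) \<circ> D\<psi>)) (at (\<phi> p))"
    apply (rule diff_chain_at[OF dpsi]) using der[OF assms(1)] psip by simp
  then have h1: "((\<lambda>x. x) has_derivative (frechet_derivative \<phi> (at p) \<circ> D\<psi>)) (at (\<phi> p))"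
    apply (rule has_derivative_transform_within_open[OF _ oU pU])
    using img \<psi>_def by (auto simp: f_inv_into_f)
  have "frechet_derivative \<phi> (at p) \<circ> D\<psi> = (\<lambda>x. x)"
    using has_derivative_unique[OF h1 has_derivative_ident] .
  then have "frechet_derivative \<phi> (at p) (D\<psi> (axis i 1)) = axis i 1"
    by (metis comp_apply)
  then show "\<exists>v. frechet_derivative \<phi> (at p) v $ i = 1" by (metis axis_nth)
qed



lemma local_conv:
  fixes \<phi> :: "real^'n \<Rightarrow> real^'n" and D :: "real^'n \<Rightarrow> real^'n \<Rightarrow> real^'n"
  assumes oV: "open V" and pV: "p \<in> V"
    and memK: "\<And>z. z \<in> V \<Longrightarrow> (z \<in> K \<longleftrightarrow> 0 \<le> \<phi> z $ i)"
    and der: "\<And>z. z \<in> V \<Longrightarrow> (\<phi> has_derivative D z) (at z)"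
    and cont: "\<And>w. continuous_on V (\<lambda>z. D z w)"
    and v: "D p v $ i = 1" and lam: "lam > 0"
  shows "\<exists>\<delta>>0. \<exists>\<rho>>0. \<forall>x y r. x \<in> K \<longrightarrow> ball y r \<subseteq> K \<longrightarrow> dist x y \<le> lam * r
            \<longrightarrow> 0 < r \<longrightarrow> r < \<rho> \<longrightarrow> x \<in> ball p \<delta> \<longrightarrow> convex hull {x, y} \<subseteq> K"
proof -
  have bl: "bounded_linear (D z)" if "z \<in> V" for z using der[OF that] has_derivative_bounded_linear by blast
  define Db where "Db z = Blinfun (D z)" for z
  have Dbap: "blinfun_apply (Db z) = D z" if "z \<in> V" for z
    using bl[OF that] Db_def bounded_linear_Blinfun_apply by simp
  have cDb: "continuous_on V Db"
  proof (rule continuous_on_blinfun_componentwise)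
    fix j :: "real^'n" show "continuous_on V (\<lambda>x. Db x j)"
      using cont[of j] by (rule continuous_on_eq) (simp add: Dbap)
  qed
  have "v \<noteq> 0" using v linear_0[OF bounded_linear.linear[OF bl[OF pV]]] by auto
  define nv where "nv = norm v"
  have nv: "nv > 0" using \<open>v \<noteq> 0\<close> nv_def by simp
  define \<epsilon> where "\<epsilon> = min (1/(2*nv)) (1/(8*lam*nv))"
  have \<epsilon>: "\<epsilon> > 0" "\<epsilon> \<le> 1/(2*nv)" "\<epsilon> \<le> 1/(8*lam*nv)" using nv lam by (auto simp: \<epsilon>_def)
  obtain d0 where d0: "d0 > 0" "\<forall>z\<in>V. dist z p < d0 \<longrightarrow> dist (Db z) (Db p) < \<epsilon>"
    using cDb pV \<epsilon>(1) unfolding continuous_on_iff by blast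
  obtain d2 where d2: "d2 > 0" "ball p d2 \<subseteq> V" using oV pV openE by blast
  define d1 where "d1 = min d0 d2"
  define S where "S = ball p d1"
  have d1: "d1 > 0" using d0 d2 d1_def by simp
  have SV: "S \<subseteq> V" using d2 S_def d1_def by auto
  have Sn: "norm (Db z - Db p) < \<epsilon>" if "z \<in> S" for z
  proof -
    have "z \<in> V" "dist z p < d0" using that SV S_def d1_def by (auto simp: dist_commute)
    then show ?thesis using d0(2) by (simp add: dist_norm)
  qed
  define F where "F z = \<phi> z $ i - D p z $ i" for z
  have Lip: "\<bar>F a - F b\<bar> \<le> \<epsilon> * norm (a - b)" if "a \<in> S" "b \<in> S" for a b
  proof -
    have "norm (F a - F b) \<le> \<epsilon> * norm (a - b)"
    proof (rule differentiable_bound[where f' = "\<lambda>z u. D z u $ i - D p u $ i"])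
      show "convex S" by (simp add: S_def)
      fix z assume z: "z \<in> S"
      have g1: "((\<lambda>z. \<phi> z $ i) has_derivative (\<lambda>u. D z u $ i)) (at z)"
        using bounded_linear.has_derivative[OF bounded_linear_vec_nth der] z SV by blast
      have g2: "((\<lambda>z. D p z $ i) has_derivative (\<lambda>u. D p u $ i)) (at z)"
        using bounded_linear.has_derivative[OF bounded_linear_vec_nth bounded_linear_imp_has_derivative[OF bl[OF pV]]] .
      show "(F has_derivative (\<lambda>u. D z u $ i - D p u $ i)) (at z within S)"
        unfolding F_def using has_derivative_at_withinI[OF has_derivative_diff[OF g1 g2]] .
      show "onorm (\<lambda>u. D z u $ i - D p u $ i) \<le> \<epsilon>"
      proof (rule onorm_le)
        fix u
        have "norm (D z u $ i - D p u $ i) \<le> norm (D z u - D p u)"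
          using component_le_norm_cart[of "D z u - D p u" i] by simp
        also have "D z u - D p u = blinfun_apply (Db z - Db p) u"
          using Dbap z SV pV by (auto simp: blinfun.diff_left)
        also have "norm (blinfun_apply (Db z - Db p) u) \<le> norm (Db z - Db p) * norm u" by (rule norm_blinfun)
        also have "\<dots> \<le> \<epsilon> * norm u" using Sn[OF z] by (simp add: mult_right_mono)
        finally show "norm (D z u $ i - D p u $ i) \<le> \<epsilon> * norm u" .
      qed
    qed (use that in auto)
    then show ?thesis by simp
  qed
  have lin: "linear (\<lambda>u. D p u $ i)"
    using bounded_linear.linear[OF bounded_linear_compose[OF bounded_linear_vec_nth bl[OF pV]]] .
  define \<rho> where "\<rho> = min (d1/4) (d1/(4*lam))"
  have \<rho>0: "\<rho> > 0" using d1 lam by (auto simp: \<rho>_def)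
  have main: "\<forall>x y r. x \<in> K \<longrightarrow> ball y r \<subseteq> K \<longrightarrow> dist x y \<le> lam * r
            \<longrightarrow> 0 < r \<longrightarrow> r < \<rho> \<longrightarrow> x \<in> ball p (d1/4) \<longrightarrow> convex hull {x, y} \<subseteq> K"
  proof (intro allI impI)
    fix x y r
    assume xK: "x \<in> K" and byK: "ball y r \<subseteq> K" and dxy: "dist x y \<le> lam * r" and r0: "0 < r"
      and rr0: "r < \<rho>" and xb: "x \<in> ball p (d1/4)"
    have rr: "r < min (d1/4) (d1/(4*lam))" using rr0 by (simp add: \<rho>_def)
    have "lam * r < d1/4" using rr lam by (simp add: field_simps)
    then have yb: "dist p y < d1/2" using xb dxy dist_triangle[of p y x] by (auto simp: dist_commute)
    have yS: "y \<in> S" and xS: "x \<in> S" using yb xb d1 by (auto simp: S_def)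
    define w where "w = y - (r/(2*nv)) *\<^sub>R v"
    have nw: "norm (y - w) = r/2" using nv r0 by (simp add: w_def nv_def)
    have "w \<in> ball y r" using nw r0 by (simp add: dist_norm)
    then have wK: "w \<in> K" using byK by blast
    have "dist p w < d1"
    proof -
      have a: "dist p w \<le> dist p y + dist y w" by (rule dist_triangle)
      have b: "dist y w = r/2" using nw by (simp add: dist_norm)
      have c: "r < d1/4" using rr by simp
      show ?thesis using a b c yb r0 by linarith
    qed
    then have wS: "w \<in> S" by (simp add: S_def)
    have hw: "0 \<le> \<phi> w $ i" using memK[of w] wK subsetD[OF SV wS] by simp
    have "D p (y - w) $ i = r/(2*nv)"
      using linear_scale[OF lin, of "r/(2*nv)" v] v by (simp add: w_def)
    then have "F y - F w = \<phi> y $ i - \<phi> w $ i - r/(2*nv)"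
      using linear_diff[OF lin, of y w] by (simp add: F_def)
    moreover have "\<bar>F y - F w\<bar> \<le> \<epsilon> * (r/2)" using Lip[OF yS wS] nw by simp
    moreover have "\<epsilon> * (r/2) \<le> r/(4*nv)" using \<epsilon>(2) r0 nv
    proof -
      have "\<epsilon> * (r/2) \<le> (1/(2*nv)) * (r/2)" using \<epsilon>(2) r0 by (intro mult_right_mono) auto
      also have "\<dots> = r/(4*nv)" by simp
      finally show ?thesis .
    qed
    moreover have "r/(2*nv) = 2*(r/(4*nv))" by (simp add: field_simps)
    ultimately have hy: "\<phi> y $ i \<ge> r/(4*nv)" using hw by linarith
    have hx: "\<phi> x $ i \<ge> 0" using memK[of x] xK subsetD[OF SV xS] by simp
    define d where "d = norm (x - y)"
    have dd: "d \<le> lam * r" using dxy by (simp add: d_def dist_norm)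
    have ed: "2 * \<epsilon> * d \<le> r/(4*nv)"
    proof -
      have "2 * \<epsilon> * d \<le> 2 * (1/(8*lam*nv)) * (lam * r)"
        using \<epsilon> dd lam nv by (intro mult_mono) (auto simp: d_def)
      also have "\<dots> = r/(4*nv)" using lam nv by (simp add: field_simps)
      finally show ?thesis .
    qed
    show "convex hull {x, y} \<subseteq> K"
    proof
      fix z assume "z \<in> convex hull {x, y}"
      then obtain t where t: "0 \<le> t" "t \<le> 1" and z: "z = (1 - t) *\<^sub>R x + t *\<^sub>R y"
        by (auto simp: segment_convex_hull[symmetric] closed_segment_def)
      have zS: "z \<in> S" using convexD_alt[of S x y t] xS yS t z by (simp add: S_def)
      have "z - x = t *\<^sub>R (y - x)" by (simp add: z algebra_simps)
      then have nzx: "norm (z - x) = t * d" using t by (simp add: d_def norm_minus_commute)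
      have "y - z = (1 - t) *\<^sub>R (y - x)" by (simp add: z algebra_simps)
      then have nyz: "norm (y - z) = (1 - t) * d" using t by (simp add: d_def norm_minus_commute)
      have e1: "F z \<ge> F x - \<epsilon> * (t * d)" using Lip[OF zS xS] nzx by simp
      have e2: "F z \<ge> F y - \<epsilon> * ((1 - t) * d)" using Lip[OF yS zS] nyz by simp
      have lz: "D p z $ i = (1 - t) * D p x $ i + t * D p y $ i"
        using linear_add[OF lin] linear_scale[OF lin] by (simp add: z)
      have m1: "(1 - t) * F z \<ge> (1 - t) * (F x - \<epsilon> * (t * d))" using e1 t by (simp add: mult_left_mono)
      have m2: "t * F z \<ge> t * (F y - \<epsilon> * ((1 - t) * d))" using e2 t by (simp add: mult_left_mono)
      have "\<phi> z $ i = (1 - t) * F z + t * F z + D p z $ i" by (simp add: F_def algebra_simps)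
      also have "\<dots> \<ge> (1 - t) * (F x - \<epsilon> * (t * d)) + t * (F y - \<epsilon> * ((1 - t) * d)) + D p z $ i"
        using m1 m2 by linarith
      finally have "\<phi> z $ i \<ge> (1 - t) * \<phi> x $ i + t * (\<phi> y $ i - 2 * \<epsilon> * d * (1 - t))"
        by (simp add: lz F_def algebra_simps)
      moreover have "(1 - t) * \<phi> x $ i \<ge> 0" using hx t by simp
      moreover have "\<phi> y $ i - 2 * \<epsilon> * d * (1 - t) \<ge> 0"
      proof -
        have "2 * \<epsilon> * d * (1 - t) \<le> 2 * \<epsilon> * d" using t \<epsilon> by (simp add: d_def mult_left_le)
        then show ?thesis using ed hy by linarith
      qed
      ultimately have "\<phi> z $ i \<ge> 0" using t mult_nonneg_nonneg[of t] by (smt (verit))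
      then show "z \<in> K" using memK[of z] subsetD[OF SV zS] by simp
    qed
  qed
  show ?thesis apply (rule exI[of _ "d1/4"]) using d1 \<rho>0 main by auto
qed

theorem lemma3p7:
  fixes K :: "(real^'n::{finite,wellorder}) set" and lam :: real
  assumes "compact K" and "smooth_manifold_with_boundary K" and "lam > 0"
  shows "\<exists>rho2 > 0. \<forall>x y r. x \<in> K \<longrightarrow> ball y r \<subseteq> K \<longrightarrow> dist x y \<le> lam * r
            \<longrightarrow> 0 < r \<longrightarrow> r < rho2 \<longrightarrow> convex hull {x, y} \<subseteq> K"
proof -
  have loc: "\<forall>p\<in>K. \<exists>\<delta>>0. \<exists>\<rho>>0. \<forall>x y r. x \<in> K \<longrightarrow> ball y r \<subseteq> K \<longrightarrow> dist x y \<le> lam * r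
            \<longrightarrow> 0 < r \<longrightarrow> r < \<rho> \<longrightarrow> x \<in> ball p \<delta> \<longrightarrow> convex hull {x, y} \<subseteq> K"
  proof
    fix p assume pK: "p \<in> K"
    then obtain V U \<phi> where ch: "p \<in> V" "diffeomorphism_between \<phi> V U" "\<phi> ` (V \<inter> K) = U \<inter> half_space"
      using assms(2) unfolding smooth_manifold_with_boundary_def by blast
    note cf = chart_facts[OF ch]
    obtain v where v: "frechet_derivative \<phi> (at p) v $ (LEAST i::'n. True) = 1" using cf(5) by blast
    show "\<exists>\<delta>>0. \<exists>\<rho>>0. \<forall>x y r. x \<in> K \<longrightarrow> ball y r \<subseteq> K \<longrightarrow> dist x y \<le> lam * r
            \<longrightarrow> 0 < r \<longrightarrow> r < \<rho> \<longrightarrow> x \<in> ball p \<delta> \<longrightarrow> convex hull {x, y} \<subseteq> K"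
      by (rule local_conv[OF cf(1) ch(1) cf(2) cf(3) cf(4) v assms(3)])
  qed
  then obtain \<delta> where \<delta>: "\<forall>p\<in>K. \<delta> p > 0 \<and> (\<exists>\<rho>>0. \<forall>x y r. x \<in> K \<longrightarrow> ball y r \<subseteq> K \<longrightarrow> dist x y \<le> lam * r
            \<longrightarrow> 0 < r \<longrightarrow> r < \<rho> \<longrightarrow> x \<in> ball p (\<delta> p) \<longrightarrow> convex hull {x, y} \<subseteq> K)"
    using bchoice[OF loc] by blast
  then obtain \<rho> where \<rho>: "\<forall>p\<in>K. \<rho> p > 0 \<and> (\<forall>x y r. x \<in> K \<longrightarrow> ball y r \<subseteq> K \<longrightarrow> dist x y \<le> lam * r
            \<longrightarrow> 0 < r \<longrightarrow> r < \<rho> p \<longrightarrow> x \<in> ball p (\<delta> p) \<longrightarrow> convex hull {x, y} \<subseteq> K)"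
    using bchoice[of K] by (metis (no_types, lifting))
  show ?thesis
  proof (cases "K = {}")
    case True
    have "(1::real) > 0" by simp
    then show ?thesis using True by blast
  next
    case False
    have cov: "K \<subseteq> (\<Union>p\<in>K. ball p (\<delta> p))"
    proof
      fix p assume "p \<in> K"
      then have "p \<in> ball p (\<delta> p)" using \<delta> by simp
      then show "p \<in> (\<Union>p\<in>K. ball p (\<delta> p))" using \<open>p \<in> K\<close> by blast
    qed
    obtain F where F: "F \<subseteq> K" "finite F" "K \<subseteq> (\<Union>p\<in>F. ball p (\<delta> p))"
      by (rule compactE_image[OF assms(1) open_ball cov])
    have Fne: "F \<noteq> {}" using F(3) False by auto
    define r0 where "r0 = Min (\<rho> ` F)"
    have r0: "r0 > 0" unfolding r0_def
    proof (subst Min_gr_iff)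
      show "finite (\<rho> ` F)" using F(2) by simp
      show "\<rho> ` F \<noteq> {}" using Fne by simp
      show "\<forall>a\<in>\<rho> ` F. 0 < a" using F(1) \<rho> by blast
    qed
    show ?thesis
    proof (rule exI[of _ r0], intro conjI allI impI)
      show "0 < r0" by (rule r0)
      fix x y r
      assume h: "x \<in> K" "ball y r \<subseteq> K" "dist x y \<le> lam * r" "0 < r" "r < r0"
      obtain p where p: "p \<in> F" "x \<in> ball p (\<delta> p)" using F(3) h(1) by blast
      have "r0 \<le> \<rho> p" using p F(2) by (simp add: r0_def)
      then have rp: "r < \<rho> p" using h(5) by simp
      have pK: "p \<in> K" using p F(1) by blast
      have "\<forall>x y r. x \<in> K \<longrightarrow> ball y r \<subseteq> K \<longrightarrow> dist x y \<le> lam * r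
            \<longrightarrow> 0 < r \<longrightarrow> r < \<rho> p \<longrightarrow> x \<in> ball p (\<delta> p) \<longrightarrow> convex hull {x, y} \<subseteq> K"
        using \<rho> pK by blast
      then show "convex hull {x, y} \<subseteq> K" using h rp p(2) by blast
    qed
  qed
qed

end
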